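(* Let $p,s\in\mathbb{N}$. There does not exist a $p$-qubit UPB of size $s$ when $2^p-4<s<2^p$.
   Context: A product state in $(\mathbb{C}^2)^{\otimes p}$ is a vector $|v_1\rangle\otimes\cdots\otimes|v_p\rangle$ with each $|v_j\rangle\in\mathbb{C}^2$. A $p$-qubit unextendible product basis (UPB) is a finite set $\mathcal{S}\subseteq(\mathbb{C}^2)^{\otimes p}$ of unit product vectors that are pairwise orthogonal, such that no nonzero product vector outside $\mathcal{S}$ is orthogonal to every element of $\mathcal{S}$. The size of a UPB is its number of elements. *)

theory Defs
  imports Complex_Main
begin

text \<open>Vectors in (C^2)^{tensor p} are functions on bit strings of length p
 (computational basis), extended by 0 to other lists.\<close>

definition qidx :: "nat \<Rightarrow> bool list set" where
  "qidx p = {xs. length xs = p}"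

definition prod_vec :: "nat \<Rightarrow> (nat \<Rightarrow> bool \<Rightarrow> complex) \<Rightarrow> (bool list \<Rightarrow> complex)" where
  "prod_vec p vs = (\<lambda>xs. if length xs = p then (\<Prod>j<p. vs j (xs ! j)) else 0)"

definition is_product :: "nat \<Rightarrow> (bool list \<Rightarrow> complex) \<Rightarrow> bool" where
  "is_product p v \<longleftrightarrow> (\<exists>vs. v = prod_vec p vs)"

definition qinner :: "nat \<Rightarrow> (bool list \<Rightarrow> complex) \<Rightarrow> (bool list \<Rightarrow> complex) \<Rightarrow> complex" where
  "qinner p u w = (\<Sum>xs\<in>qidx p. cnj (u xs) * w xs)"

definition is_UPB :: "nat \<Rightarrow> (bool list \<Rightarrow> complex) set \<Rightarrow> bool" where
  "is_UPB p S \<longleftrightarrow>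
     finite S \<and>
     (\<forall>v\<in>S. is_product p v \<and> qinner p v v = 1) \<and>
     (\<forall>u\<in>S. \<forall>w\<in>S. u \<noteq> w \<longrightarrow> qinner p u w = 0) \<and>
     (\<forall>v. is_product p v \<and> v \<noteq> (\<lambda>_. 0) \<and> v \<notin> S \<longrightarrow> \<not> (\<forall>u\<in>S. qinner p u v = 0))"

end

theory Submission
  imports Defs "HOL-Library.Function_Algebras"
begin

lemma fun_sum_apply: "(sum F A) x = (\<Sum>a\<in>A. F a x)"
  by (induction A rule: infinite_finite_induct) auto

lemma finite_qidx: "finite (qidx q)"
proof -
  show ?thesis using finite_lists_length_eq[of "UNIV::bool set" q] by (simp add: qidx_def)
qed

lemma finite_len: "finite {xs::bool list. length xs = n}"
  using finite_qidx[of n] by (simp add: qidx_def)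

lemma card_qidx: "card (qidx q) = 2 ^ q"
proof -
  show ?thesis using card_lists_length_eq[of "UNIV::bool set" q] by (simp add: qidx_def)
qed

lemma qinner_cnj: "qinner q w u = cnj (qinner q u w)"
  unfolding qinner_def by (simp add: mult.commute)

lemma qinner_sum_right:
  "qinner q u (\<lambda>x. \<Sum>k\<in>K. c k * h k x) = (\<Sum>k\<in>K. c k * qinner q u (h k))"
  unfolding qinner_def by (simp add: sum_distrib_left sum.swap[of _ K] mult.left_commute)

lemma qinner_cong:
  assumes "\<And>xs. length xs = q \<Longrightarrow> u xs = u' xs" "\<And>xs. length xs = q \<Longrightarrow> w xs = w' xs"
  shows "qinner q u w = qinner q u' w'"
  unfolding qinner_def by (rule sum.cong) (auto simp: qidx_def assms)

lemma cnj_mult_self: "cnj z * z = of_real ((cmod z)^2)"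
  by (simp only: complex_norm_square mult.commute)

lemma qinner_self_zero:
  assumes "qinner q u u = 0" "length xs = q" shows "u xs = 0"
proof -
  have "qinner q u u = (\<Sum>xs\<in>qidx q. of_real ((cmod (u xs))\<^sup>2))"
    unfolding qinner_def by (rule sum.cong) (simp_all only: cnj_mult_self)
  also have "\<dots> = of_real (\<Sum>xs\<in>qidx q. (cmod (u xs))\<^sup>2)" by simp
  finally have "(\<Sum>xs\<in>qidx q. (cmod (u xs))\<^sup>2) = 0" using assms(1) of_real_eq_0_iff by metis
  hence "\<forall>x\<in>qidx q. (cmod (u x))\<^sup>2 = 0"
    by (subst sum_nonneg_eq_0_iff[symmetric]) (auto simp: finite_qidx)
  thus ?thesis using assms(2) by (auto simp: qidx_def)
qed

interpretation fvs: vector_space "\<lambda>(c::complex) (f::bool list \<Rightarrow> complex). (\<lambda>x. c * f x)"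
  by unfold_locales (auto simp: fun_eq_iff algebra_simps)

lemma orth_card_le:
  fixes g :: "'i \<Rightarrow> bool list \<Rightarrow> complex"
  assumes fin: "finite J"
    and orth: "\<And>i j. i \<in> J \<Longrightarrow> j \<in> J \<Longrightarrow> i \<noteq> j \<Longrightarrow> qinner q (g i) (g j) = 0"
    and nz: "\<And>j. j \<in> J \<Longrightarrow> qinner q (g j) (g j) \<noteq> 0"
  shows "card J \<le> 2 ^ q"
proof -
  define restr where "restr = (\<lambda>v::bool list \<Rightarrow> complex. \<lambda>xs. if length xs = q then v xs else 0)"
  have qr: "qinner q (restr u) (restr w) = qinner q u w" for u w
    by (rule qinner_cong) (auto simp: restr_def)
  define S where "S = (\<lambda>j. restr (g j)) ` J"
  define T where "T = (\<lambda>xs. \<lambda>ys. if ys = xs then (1::complex) else 0) ` qidx q"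
  have inj: "inj_on (\<lambda>j. restr (g j)) J"
  proof (rule inj_onI)
    fix i j assume "i \<in> J" "j \<in> J" "restr (g i) = restr (g j)"
    hence "qinner q (g i) (g j) = qinner q (g i) (g i)" using qr by metis
    thus "i = j" using orth nz \<open>i \<in> J\<close> \<open>j \<in> J\<close> by metis
  qed
  have cS: "card S = card J" unfolding S_def using inj by (simp add: card_image)
  have fT: "finite T" unfolding T_def by (simp add: finite_qidx)
  have cT: "card T \<le> 2 ^ q" unfolding T_def using card_image_le[OF finite_qidx] card_qidx by metis
  have sp: "S \<subseteq> fvs.span T"
  proof
    fix v assume "v \<in> S"
    then obtain j where v: "v = restr (g j)" unfolding S_def by auto
    have "v = (\<Sum>xs\<in>qidx q. (\<lambda>ys. g j xs * (if ys = xs then 1 else 0)))"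
      by (auto simp: fun_eq_iff fun_sum_apply v restr_def qidx_def finite_len if_distrib sum.delta sum.delta' cong: if_cong)
    also have "\<dots> \<in> fvs.span T"
      by (intro fvs.span_sum fvs.span_scale[of _ _ "g j _", simplified] fvs.span_base) (auto simp: T_def)
    finally show "v \<in> fvs.span T" .
  qed
  have ind: "fvs.independent S"
  proof
    assume "fvs.dependent S"
    then obtain t u where t: "finite t" "t \<subseteq> S" "(\<Sum>v\<in>t. (\<lambda>x. u v * v x)) = 0" and
      "\<exists>v\<in>t. u v \<noteq> 0" unfolding fvs.dependent_explicit by blast
    then obtain v where v: "v \<in> t" "u v \<noteq> 0" by blast
    have "0 = qinner q v (\<lambda>x. \<Sum>w\<in>t. u w * w x)"
      using t(3) by (simp add: qinner_def fun_eq_iff fun_sum_apply)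
    also have "\<dots> = (\<Sum>w\<in>t. u w * qinner q v w)" by (rule qinner_sum_right)
    also have "\<dots> = u v * qinner q v v"
    proof (rule sum.remove[OF t(1) v(1), THEN trans], rule trans[OF _ add_0_right], rule arg_cong2[where f="(+)"])
      show "(\<Sum>w\<in>t - {v}. u w * qinner q v w) = 0"
      proof (rule sum.neutral, rule ballI)
        fix w assume "w \<in> t - {v}"
        hence w: "w \<in> t" "w \<noteq> v" by auto
        obtain i where "i \<in> J" "v = restr (g i)" using v t(2) S_def by auto
        moreover obtain j where "j \<in> J" "w = restr (g j)" using w t(2) S_def by auto
        ultimately have "i \<noteq> j" "qinner q v w = qinner q (g i) (g j)" "i \<in> J" "j \<in> J" using w qr by auto
        thus "u w * qinner q v w = 0" using orth by simp
      qed
    qed simp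
    finally have "qinner q v v = 0" using v by simp
    moreover obtain i where "i \<in> J" "v = restr (g i)" using v t(2) S_def by auto
    ultimately show False using nz qr by metis
  qed
  have "card S \<le> card T" using fvs.independent_span_bound[OF fT ind sp] by simp
  thus ?thesis using cS cT by simp
qed

lemma qinner_diff_right: "qinner q u (\<lambda>x. a x - b x) = qinner q u a - qinner q u b"
  unfolding qinner_def by (simp add: algebra_simps sum_subtractf)

lemma qinner_scale: "qinner q (\<lambda>x. \<alpha> * U x) (\<lambda>x. \<beta> * W x) = cnj \<alpha> * \<beta> * qinner q U W"
  unfolding qinner_def by (simp add: sum_distrib_left algebra_simps)

lemma orth_expand:
  fixes g :: "'i \<Rightarrow> bool list \<Rightarrow> complex"
  assumes fin: "finite J"
    and orth: "\<And>i j. i \<in> J \<Longrightarrow> j \<in> J \<Longrightarrow> i \<noteq> j \<Longrightarrow> qinner q (g i) (g j) = 0"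
    and nz: "\<And>j. j \<in> J \<Longrightarrow> qinner q (g j) (g j) \<noteq> 0"
    and cJ: "card J = 2 ^ q"
  shows "qinner q u z = (\<Sum>k\<in>J. (qinner q (g k) z / qinner q (g k) (g k)) * qinner q u (g k))"
proof -
  define c where "c k = qinner q (g k) z / qinner q (g k) (g k)" for k
  define w where "w = (\<lambda>xs. z xs - (\<Sum>k\<in>J. c k * g k xs))"
  have wo: "qinner q (g j) w = 0" if j: "j \<in> J" for j
  proof -
    have "qinner q (g j) w = qinner q (g j) z - (\<Sum>k\<in>J. c k * qinner q (g j) (g k))"
      unfolding w_def by (simp add: qinner_diff_right qinner_sum_right)
    also have "(\<Sum>k\<in>J. c k * qinner q (g j) (g k)) = c j * qinner q (g j) (g j)"
    proof -
      have "(\<Sum>k\<in>J-{j}. c k * qinner q (g j) (g k)) = 0" by (rule sum.neutral) (auto simp: orth j)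
      thus ?thesis by (simp add: sum.remove[OF fin j])
    qed
    also have "c j * qinner q (g j) (g j) = qinner q (g j) z" using nz[OF j] by (simp add: c_def)
    finally show ?thesis by simp
  qed
  have wo': "qinner q w (g j) = 0" if j: "j \<in> J" for j
    using wo[OF j] qinner_cnj[of q w "g j"] by simp
  have ww: "qinner q w w = 0"
  proof (rule ccontr)
    assume nw: "qinner q w w \<noteq> 0"
    define h where "h = (\<lambda>k. case k of None \<Rightarrow> w | Some j \<Rightarrow> g j)"
    define J' where "J' = insert None (Some ` J)"
    have "card J' \<le> 2 ^ q"
    proof (rule orth_card_le[of J' q h])
      show "finite J'" using fin by (simp add: J'_def)
    next
      fix i j assume "i \<in> J'" "j \<in> J'" "i \<noteq> j"
      thus "qinner q (h i) (h j) = 0"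
        by (cases i; cases j) (auto simp: J'_def h_def orth wo wo')
    next
      fix j assume "j \<in> J'" thus "qinner q (h j) (h j) \<noteq> 0"
        by (auto simp: J'_def h_def nz nw)
    qed
    moreover have "card J' = card J + 1" using fin
      by (simp add: J'_def card_image)
    ultimately show False using cJ by simp
  qed
  have "qinner q u z = qinner q u (\<lambda>x. \<Sum>k\<in>J. c k * g k x)"
  proof (rule qinner_cong)
    fix xs :: "bool list" assume "length xs = q"
    from qinner_self_zero[OF ww this] show "z xs = (\<Sum>k\<in>J. c k * g k xs)" by (simp add: w_def)
  qed simp
  also have "\<dots> = (\<Sum>k\<in>J. c k * qinner q u (g k))" by (rule qinner_sum_right)
  finally show ?thesis by (simp add: c_def)
qed

definition ci :: "(bool \<Rightarrow> complex) \<Rightarrow> (bool \<Rightarrow> complex) \<Rightarrow> complex" where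
  "ci a b = cnj (a False) * b False + cnj (a True) * b True"
definition det2 :: "(bool \<Rightarrow> complex) \<Rightarrow> (bool \<Rightarrow> complex) \<Rightarrow> complex" where
  "det2 a b = a False * b True - a True * b False"
definition perp :: "(bool \<Rightarrow> complex) \<Rightarrow> (bool \<Rightarrow> complex)" where
  "perp b = (\<lambda>x. if x then cnj (b False) else - cnj (b True))"
definition nz :: "(bool \<Rightarrow> complex) \<Rightarrow> bool" where
  "nz a \<longleftrightarrow> a False \<noteq> 0 \<or> a True \<noteq> 0"

lemma ci_sym: "ci b a = cnj (ci a b)" by (simp add: ci_def mult.commute)
lemma det2_sym: "det2 b a = - det2 a b" by (simp add: det2_def algebra_simps)
lemma det2_self: "det2 a a = 0" by (simp add: det2_def mult.commute)
lemma ci_perp: "ci a (perp b) = - cnj (det2 a b)" by (simp add: ci_def perp_def det2_def algebra_simps)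
lemma nz_perp: "nz (perp b) \<longleftrightarrow> nz b" by (auto simp: nz_def perp_def)

lemma ci_self_nz: "ci a a \<noteq> 0 \<longleftrightarrow> nz a"
proof -
  have "ci a a = of_real ((cmod (a False))^2 + (cmod (a True))^2)"
    by (simp add: ci_def cnj_mult_self)
  moreover have "(cmod (a False))^2 + (cmod (a True))^2 = 0 \<longleftrightarrow> \<not> nz a"
    by (auto simp: nz_def add_nonneg_eq_0_iff)
  ultimately show ?thesis by (metis of_real_eq_0_iff)
qed

lemma par_scal: assumes "det2 a b = 0" "nz a" shows "\<exists>l. \<forall>x. b x = l * a x"
proof (cases "a False = 0")
  case True
  hence "a True \<noteq> 0" using assms(2) by (simp add: nz_def)
  moreover have "b False = 0" using assms(1) True \<open>a True \<noteq> 0\<close> by (simp add: det2_def)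
  ultimately show ?thesis using True
    by (intro exI[of _ "b True / a True"]) (auto intro: bool.induct split: bool.splits simp: all_bool_eq)
next
  case False
  have "b True = b False / a False * a True" using assms(1) False
    by (simp add: det2_def field_simps)
  thus ?thesis using False by (intro exI[of _ "b False / a False"]) (simp add: all_bool_eq)
qed

lemma T1: assumes "det2 a b = 0" "det2 b c = 0" "nz b" shows "det2 a c = 0"
proof -
  have "b False * det2 a c = a False * det2 b c + c False * det2 a b"
    "b True * det2 a c = a True * det2 b c + c True * det2 a b"
    by (simp_all add: det2_def algebra_simps)
  thus ?thesis using assms by (auto simp: nz_def)
qed

lemma T2: assumes "det2 a b = 0" "ci b c = 0" "nz b" shows "ci a c = 0"
proof -
  obtain l where "\<forall>x. a x = l * b x" using par_scal[of b a] assms det2_sym[of a b] by auto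
  hence "ci a c = cnj l * ci b c" by (simp add: ci_def algebra_simps)
  thus ?thesis using assms by simp
qed

lemma T3: assumes "ci a b = 0" "det2 b c = 0" "nz b" shows "ci a c = 0"
proof -
  obtain l where "\<forall>x. c x = l * b x" using par_scal[of b c] assms by auto
  hence "ci a c = l * ci a b" by (simp add: ci_def algebra_simps)
  thus ?thesis using assms by simp
qed

lemma T4: assumes "ci a b = 0" "ci b c = 0" "nz b" shows "det2 a c = 0"
proof -
  have ba: "ci b a = 0" using assms(1) ci_sym[of a b] by simp
  have "cnj (b False) * det2 a c = c True * ci b a - a True * ci b c"
    "cnj (b True) * det2 a c = a False * ci b c - c False * ci b a"
    by (simp_all add: det2_def ci_def algebra_simps)
  thus ?thesis using assms ba by (auto simp: nz_def)
qed

lemma E4: assumes "det2 a b = 0" "ci a b = 0" "nz a" "nz b" shows False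
proof -
  obtain l where l: "\<forall>x. b x = l * a x" using par_scal assms by blast
  hence "ci a b = l * ci a a" by (simp add: ci_def algebra_simps)
  hence "l = 0" using assms(2,3) ci_self_nz[of a] by auto
  thus False using l assms(4) by (simp add: nz_def)
qed

lemma qidx_Suc: "qidx (Suc q) = (\<lambda>(b,xs). b#xs) ` (UNIV \<times> qidx q)"
  by (auto simp: qidx_def image_iff length_Suc_conv)

lemma qinner_Suc: "qinner (Suc q) u w =
   qinner q (\<lambda>xs. u (False#xs)) (\<lambda>xs. w (False#xs)) + qinner q (\<lambda>xs. u (True#xs)) (\<lambda>xs. w (True#xs))"
proof -
  have inj: "inj_on (\<lambda>(b,xs). b#xs) (UNIV \<times> qidx q)" by (auto simp: inj_on_def)
  have "qinner (Suc q) u w = (\<Sum>(b,xs)\<in>UNIV \<times> qidx q. cnj (u (b#xs)) * w (b#xs))"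
    unfolding qinner_def qidx_Suc by (subst sum.reindex[OF inj]) (simp add: case_prod_unfold)
  also have "\<dots> = (\<Sum>b\<in>UNIV. \<Sum>xs\<in>qidx q. cnj (u (b#xs)) * w (b#xs))"
    by (simp add: sum.cartesian_product)
  finally show ?thesis by (simp add: UNIV_bool qinner_def)
qed

lemma qinner_tensor:
  assumes "\<And>b xs. length xs = q \<Longrightarrow> u (b#xs) = a b * U xs"
    "\<And>b xs. length xs = q \<Longrightarrow> w (b#xs) = c b * W xs"
  shows "qinner (Suc q) u w = ci a c * qinner q U W"
proof -
  have "qinner q (\<lambda>xs. u (b#xs)) (\<lambda>xs. w (b#xs)) = qinner q (\<lambda>xs. a b * U xs) (\<lambda>xs. c b * W xs)" for b
    by (rule qinner_cong) (simp_all add: assms)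
  thus ?thesis by (simp only: qinner_Suc qinner_scale) (simp add: ci_def algebra_simps)
qed

lemma prod_vec_Suc: "length xs = q \<Longrightarrow>
  prod_vec (Suc q) vs (b#xs) = vs 0 b * prod_vec q (\<lambda>j. vs (Suc j)) xs"
  unfolding prod_vec_def by (simp add: prod.lessThan_Suc_shift del: prod.lessThan_Suc)

lemma step:
  fixes g :: "'i \<Rightarrow> bool list \<Rightarrow> complex" and I :: "'i set"
  assumes IH: "\<And>(I'::'i set) (g'::'i \<Rightarrow> bool list \<Rightarrow> complex). finite I' \<Longrightarrow>
      (\<forall>i\<in>I'. is_product q (g' i)) \<Longrightarrow>
      (\<forall>i\<in>I'. \<forall>j\<in>I'. i \<noteq> j \<longrightarrow> qinner q (g' i) (g' j) = 0) \<Longrightarrow>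
      (\<forall>i\<in>I'. qinner q (g' i) (g' i) \<noteq> 0) \<Longrightarrow>
      2^q \<le> card I' + 3 \<Longrightarrow> card I' < 2^q \<Longrightarrow>
      \<exists>y. is_product q y \<and> qinner q y y \<noteq> 0 \<and> (\<forall>i\<in>I'. qinner q (g' i) y = 0)"
  and fin: "finite I" and prod: "\<forall>i\<in>I. is_product (Suc q) (g i)"
  and orth: "\<forall>i\<in>I. \<forall>j\<in>I. i \<noteq> j \<longrightarrow> qinner (Suc q) (g i) (g j) = 0"
  and nzg: "\<forall>i\<in>I. qinner (Suc q) (g i) (g i) \<noteq> 0"
  and lo: "2^Suc q \<le> card I + 3" and hi: "card I < 2^Suc q"
  shows "\<exists>y. is_product (Suc q) y \<and> qinner (Suc q) y y \<noteq> 0 \<and> (\<forall>i\<in>I. qinner (Suc q) (g i) y = 0)"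
proof -
  define N where "N = (2::nat)^q"
  have NS: "2^Suc q = 2 * N" by (simp add: N_def)
  have N1: "N \<ge> 1" by (simp add: N_def)
  have "\<forall>i\<in>I. \<exists>vs. g i = prod_vec (Suc q) vs" using prod by (auto simp: is_product_def)
  then obtain vs where vs: "\<And>i. i \<in> I \<Longrightarrow> g i = prod_vec (Suc q) (vs i)" by metis
  define a where "a i = vs i 0" for i
  define \<rho> where "\<rho> i = prod_vec q (\<lambda>j. vs i (Suc j))" for i
  have gs: "g i (b#xs) = a i b * \<rho> i xs" if "i \<in> I" "length xs = q" for i b xs
    using that by (simp add: vs prod_vec_Suc a_def \<rho>_def)
  have inn: "qinner (Suc q) (g i) (g j) = ci (a i) (a j) * qinner q (\<rho> i) (\<rho> j)" if "i\<in>I" "j\<in>I" for i j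
    by (rule qinner_tensor) (simp_all add: gs that)
  have prod\<rho>: "is_product q (\<rho> i)" for i by (auto simp: is_product_def \<rho>_def)
  have nza: "nz (a i)" and nz\<rho>: "qinner q (\<rho> i) (\<rho> i) \<noteq> 0" if "i \<in> I" for i
    using nzg that inn[of i i] ci_self_nz by auto
  define par where "par i j \<longleftrightarrow> det2 (a i) (a j) = 0" for i j
  define ort where "ort i j \<longleftrightarrow> ci (a i) (a j) = 0" for i j
  define eqv where "eqv i j \<longleftrightarrow> par i j \<or> ort i j" for i j
  have par_sym: "par i j \<Longrightarrow> par j i" for i j by (simp add: par_def det2_sym[of "a i"])
  have ort_sym: "ort i j \<Longrightarrow> ort j i" for i j by (simp add: ort_def ci_sym[of "a i"])
  have eqv_refl: "eqv i i" for i by (simp add: eqv_def par_def det2_self)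
  have eqv_sym: "eqv i j \<Longrightarrow> eqv j i" for i j using par_sym ort_sym eqv_def by blast
  have eqv_trans: "eqv i j \<Longrightarrow> eqv j k \<Longrightarrow> j \<in> I \<Longrightarrow> eqv i k" for i j k
  proof -
    assume h: "eqv i j" "eqv j k" "j \<in> I"
    note n = nza[OF h(3)]
    show "eqv i k"
    proof (cases "par i j")
      case pij: True
      show ?thesis
      proof (cases "par j k")
        case True thus ?thesis using pij T1[OF _ _ n] unfolding eqv_def par_def by simp
      next
        case False hence "ort j k" using h(2) eqv_def by simp
        thus ?thesis using pij T2[OF _ _ n] unfolding eqv_def par_def ort_def by simp
      qed
    next
      case pij: False
      hence oij: "ort i j" using h(1) eqv_def by simp
      show ?thesis
      proof (cases "par j k")
        case True thus ?thesis using oij T3[OF _ _ n] unfolding eqv_def par_def ort_def by simp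
      next
        case False hence "ort j k" using h(2) eqv_def by simp
        thus ?thesis using oij T4[OF _ _ n] unfolding eqv_def par_def ort_def by simp
      qed
    qed
  qed
  have po: "par i j \<Longrightarrow> ort i j \<Longrightarrow> i\<in>I \<Longrightarrow> j\<in>I \<Longrightarrow> False" for i j
    using E4 nza unfolding par_def ort_def by blast
  have F2: "qinner q (\<rho> i) (\<rho> j) = 0" if "i\<in>I" "j\<in>I" "\<not> eqv i j" for i j
  proof -
    have "i \<noteq> j" using that eqv_refl by metis
    moreover have "ci (a i) (a j) \<noteq> 0" using that by (simp add: eqv_def ort_def)
    ultimately show ?thesis using orth inn[OF that(1,2)] that by auto
  qed
  define cons where "cons X \<longleftrightarrow> X \<subseteq> I \<and> (\<forall>i\<in>I. \<forall>j\<in>I. par i j \<longrightarrow> (i \<in> X \<longleftrightarrow> j \<in> X))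
      \<and> (\<forall>i\<in>I. \<forall>j\<in>I. ort i j \<longrightarrow> (i \<in> X \<longleftrightarrow> j \<notin> X))" for X
  have cons_compl: "cons X \<Longrightarrow> cons (I - X)" for X by (auto simp: cons_def)
  have cons_orth: "qinner q (\<rho> i) (\<rho> j) = 0" if "cons X" "i\<in>X" "j\<in>X" "i\<noteq>j" for X i j
  proof -
    have ij: "i \<in> I" "j \<in> I" using that by (auto simp: cons_def)
    have "\<not> ort i j" using that ij by (auto simp: cons_def)
    hence "ci (a i) (a j) \<noteq> 0" by (simp add: ort_def)
    thus ?thesis using orth inn[OF ij] that ij by auto
  qed
  have cons_card: "card X \<le> N" if "cons X" for X
  proof -
    have "X \<subseteq> I" using that by (simp add: cons_def)
    thus ?thesis unfolding N_def
      by (intro orth_card_le[of X q \<rho>]) (auto intro: finite_subset[OF _ fin] cons_orth[OF that] dest: nz\<rho>)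
  qed
  define rep where "rep i = (SOME k. k \<in> {k \<in> I. eqv i k})" for i
  have rep: "rep i \<in> I \<and> eqv i (rep i)" if "i \<in> I" for i
  proof -
    have "i \<in> {k \<in> I. eqv i k}" using that eqv_refl by simp
    hence "rep i \<in> {k \<in> I. eqv i k}" unfolding rep_def by (rule someI)
    thus ?thesis by simp
  qed
  have rep_eq: "rep i = rep j" if "i\<in>I" "j\<in>I" "eqv i j" for i j
  proof -
    have "{k \<in> I. eqv i k} = {k \<in> I. eqv j k}"
    proof (intro Collect_cong conj_cong refl iffI)
      fix k assume "eqv i k" thus "eqv j k" using eqv_trans[OF eqv_sym[OF that(3)] _ that(1)] by simp
    next
      fix k assume "eqv j k" thus "eqv i k" using eqv_trans[OF that(3) _ that(2)] by simp
    qed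
    thus ?thesis by (simp add: rep_def)
  qed
  have rep_eqv: "eqv i j" if "i\<in>I" "j\<in>I" "rep i = rep j" for i j
  proof -
    have "eqv i (rep i)" "rep i \<in> I" "eqv (rep i) j" using rep[OF that(1)] rep[OF that(2)] that(3) eqv_sym by auto
    thus ?thesis using eqv_trans by blast
  qed
  define M0 where "M0 = {i \<in> I. par i (rep i)}"
  have consM0: "cons M0"
    unfolding cons_def
  proof (intro conjI ballI impI)
    show "M0 \<subseteq> I" by (auto simp: M0_def)
  next
    fix i j assume ij: "i \<in> I" "j \<in> I" "par i j"
    hence r: "rep i = rep j" using rep_eq eqv_def by blast
    have ri: "rep i \<in> I" using rep ij by blast
    have "par i (rep i) \<longleftrightarrow> par j (rep j)"
    proof
      assume "par i (rep i)"
      thus "par j (rep j)"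
        using T1[OF par_sym[OF ij(3), unfolded par_def] _ nza[OF ij(1)]] r unfolding par_def by simp
    next
      assume "par j (rep j)"
      thus "par i (rep i)"
        using T1[OF ij(3)[unfolded par_def] _ nza[OF ij(2)]] r unfolding par_def by simp
    qed
    thus "i \<in> M0 \<longleftrightarrow> j \<in> M0" using ij unfolding M0_def by simp
  next
    fix i j assume ij: "i \<in> I" "j \<in> I" "ort i j"
    hence r: "rep i = rep j" using rep_eq eqv_def by blast
    have ri: "rep i \<in> I" "eqv i (rep i)" using rep ij by blast+
    have oji: "ci (a j) (a i) = 0" using ort_sym[OF ij(3)] by (simp add: ort_def)
    show "i \<in> M0 \<longleftrightarrow> j \<notin> M0"
    proof (cases "par i (rep i)")
      case True
      have "ort j (rep i)" using T3[OF oji _ nza[OF ij(1)]] True unfolding ort_def par_def by simp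
      hence "\<not> par j (rep i)" using po ij(2) ri(1) by blast
      thus ?thesis using True r ij unfolding M0_def by auto
    next
      case False
      hence "ort i (rep i)" using ri eqv_def by blast
      hence "par j (rep i)" using T4[OF oji _ nza[OF ij(1)]] unfolding ort_def par_def by simp
      thus ?thesis using False r ij unfolding M0_def by auto
    qed
  qed
  define M where "M = (if card (I - M0) \<le> card M0 then M0 else I - M0)"
  have consM: "cons M" using consM0 cons_compl by (simp add: M_def)
  have MI: "M \<subseteq> I" using consM by (simp add: cons_def)
  have finM: "finite M" using MI fin finite_subset by blast
  have cardI: "card I = card M + card (I - M)"
    using card_Diff_subset[OF finM MI] card_mono[OF fin MI] by simp
  have M0I: "M0 \<subseteq> I" by (auto simp: M0_def)
  have "card I = card M0 + card (I - M0)"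
    using card_Diff_subset[OF finite_subset[OF M0I fin] M0I] card_mono[OF fin M0I] by simp
  hence McardI: "card I \<le> 2 * card M"
    using cardI by (auto simp: M_def split: if_splits)
  have cardM_le: "card M \<le> N" using cons_card consM by blast
  have cover: "\<exists>Y. is_product (Suc q) Y \<and> qinner (Suc q) Y Y \<noteq> 0 \<and> (\<forall>i\<in>I. qinner (Suc q) (g i) Y = 0)"
    if x: "nz x" and y: "is_product q y" "qinner q y y \<noteq> 0"
      and cov: "\<forall>i\<in>I. ci (a i) x = 0 \<or> qinner q (\<rho> i) y = 0" for x y
  proof -
    obtain ys where ys: "y = prod_vec q ys" using y by (auto simp: is_product_def)
    define Y where "Y = prod_vec (Suc q) (\<lambda>j. if j = 0 then x else ys (j - 1))"
    have Ys: "Y (b#xs) = x b * y xs" if "length xs = q" for b xs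
      using that by (simp add: Y_def ys prod_vec_Suc)
    have "is_product (Suc q) Y" by (auto simp: is_product_def Y_def)
    moreover have "qinner (Suc q) Y Y = ci x x * qinner q y y"
      by (rule qinner_tensor) (simp_all add: Ys)
    hence "qinner (Suc q) Y Y \<noteq> 0" using x y ci_self_nz by simp
    moreover have "qinner (Suc q) (g i) Y = 0" if "i \<in> I" for i
    proof -
      have "qinner (Suc q) (g i) Y = ci (a i) x * qinner q (\<rho> i) y"
        by (rule qinner_tensor) (simp_all add: Ys gs that)
      thus ?thesis using cov that by auto
    qed
    ultimately show ?thesis by blast
  qed
  have "card M = N - 1 \<or> card M = N" using McardI cardM_le lo NS by linarith
  thus ?thesis
  proof
    assume cM: "card M = N - 1"
    obtain y where y: "is_product q y" "qinner q y y \<noteq> 0" "\<forall>i\<in>M. qinner q (\<rho> i) y = 0"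
      using IH[of M \<rho>] finM prod\<rho> cons_orth[OF consM] nz\<rho> MI cM N1 unfolding N_def[symmetric]
      by (force simp: N_def)
    define h where "h = (\<lambda>k. case k of None \<Rightarrow> y | Some j \<Rightarrow> \<rho> j)"
    define J' where "J' = insert None (Some ` M)"
    have yo: "qinner q y (\<rho> i) = 0" if "i \<in> M" for i
      using y(3) that qinner_cnj[of q y "\<rho> i"] by simp
    have finJ': "finite J'" using finM by (simp add: J'_def)
    have ex0: "qinner q u z = (\<Sum>k\<in>J'. (qinner q (h k) z / qinner q (h k) (h k)) * qinner q u (h k))" for u z
    proof (rule orth_expand[OF finJ'])
      fix i j assume "i \<in> J'" "j \<in> J'" "i \<noteq> j"
      thus "qinner q (h i) (h j) = 0"
        by (cases i; cases j) (auto simp: J'_def h_def yo y(3) cons_orth[OF consM])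
    next
      fix j assume "j \<in> J'" thus "qinner q (h j) (h j) \<noteq> 0"
        using MI by (auto simp: J'_def h_def y nz\<rho>)
    next
      show "card J' = 2 ^ q" using cM finM N1 by (simp add: J'_def card_image N_def)
    qed
    have exA: "qinner q u z = qinner q y z / qinner q y y * qinner q u y +
        (\<Sum>m\<in>M. qinner q (\<rho> m) z / qinner q (\<rho> m) (\<rho> m) * qinner q u (\<rho> m))" for u z
      using ex0[of u z] finM by (simp add: J'_def h_def sum.reindex)
    show ?thesis
    proof (cases "\<forall>j\<in>I - M. qinner q (\<rho> j) y = 0")
      case True
      show ?thesis
        by (rule cover[of "\<lambda>_. 1" y]) (use True y in \<open>auto simp: nz_def\<close>)
    next
      case False
      then obtain j0 where j0: "j0 \<in> I" "j0 \<notin> M" "qinner q (\<rho> j0) y \<noteq> 0" by blast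
      show ?thesis
      proof (rule cover[of "perp (a j0)" y])
        show "nz (perp (a j0))" using nz_perp nza j0 by simp
        show "is_product q y" "qinner q y y \<noteq> 0" using y by auto
        show "\<forall>i\<in>I. ci (a i) (perp (a j0)) = 0 \<or> qinner q (\<rho> i) y = 0"
        proof
          fix i assume i: "i \<in> I"
          show "ci (a i) (perp (a j0)) = 0 \<or> qinner q (\<rho> i) y = 0"
          proof (cases "i \<in> M")
            case True thus ?thesis using y by auto
          next
            case iM: False
            show ?thesis
            proof (cases "eqv i j0")
              case True
              have "\<not> ort i j0" using consM iM j0 i unfolding cons_def by blast
              hence "par i j0" using True eqv_def by blast
              thus ?thesis by (simp add: ci_perp par_def)
            next
              case nE: False
              have s0: "(\<Sum>m\<in>M. qinner q (\<rho> m) (\<rho> j0) / qinner q (\<rho> m) (\<rho> m) * qinner q (\<rho> i) (\<rho> m)) = 0"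
              proof (rule sum.neutral, rule ballI)
                fix m assume m: "m \<in> M"
                hence mI: "m \<in> I" using MI by auto
                show "qinner q (\<rho> m) (\<rho> j0) / qinner q (\<rho> m) (\<rho> m) * qinner q (\<rho> i) (\<rho> m) = 0"
                proof (cases "eqv m j0")
                  case True
                  hence "\<not> eqv i m" using nE eqv_trans mI by blast
                  thus ?thesis using F2 i mI by simp
                next
                  case False thus ?thesis using F2 mI j0 by simp
                qed
              qed
              have "0 = qinner q (\<rho> i) (\<rho> j0)" using F2 i j0 nE by simp
              also have "\<dots> = qinner q y (\<rho> j0) / qinner q y y * qinner q (\<rho> i) y"
                using exA[of "\<rho> i" "\<rho> j0"] s0 by simp
              finally have "qinner q y (\<rho> j0) / qinner q y y * qinner q (\<rho> i) y = 0" by simp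
              moreover have "qinner q y (\<rho> j0) \<noteq> 0" using j0 qinner_cnj[of q y "\<rho> j0"] by simp
              ultimately show ?thesis using y by simp
            qed
          qed
        qed
      qed
    qed
  next
    assume cM: "card M = N"
    have exB: "qinner q u z = (\<Sum>m\<in>M. qinner q (\<rho> m) z / qinner q (\<rho> m) (\<rho> m) * qinner q u (\<rho> m))" for u z
      by (rule orth_expand[OF finM]) (use cons_orth[OF consM] nz\<rho> MI cM in \<open>auto simp: N_def\<close>)
    define R where "R = rep ` I"
    have finR: "finite R" using fin by (simp add: R_def)
    have cnt: "card A = (\<Sum>r\<in>R. card {x\<in>A. rep x = r})" if "A \<subseteq> I" for A
    proof -
      have fA: "finite A" using that fin finite_subset by blast
      have "(\<Sum>r\<in>R. sum (\<lambda>_. 1::nat) {x. x \<in> A \<and> rep x = r}) = sum (\<lambda>_. 1) A"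
        by (rule sum.group[OF fA finR]) (use that in \<open>auto simp: R_def\<close>)
      thus ?thesis by simp
    qed
    have "\<exists>r\<in>R. card {x\<in>I - M. rep x = r} < card {x\<in>M. rep x = r}"
    proof (rule ccontr)
      assume "\<not> ?thesis"
      hence "(\<Sum>r\<in>R. card {x\<in>M. rep x = r}) \<le> (\<Sum>r\<in>R. card {x\<in>I - M. rep x = r})"
        by (intro sum_mono) auto
      hence "card M \<le> card (I - M)" using cnt[OF MI] cnt[of "I - M"] by auto
      thus False using cardI cM hi NS by linarith
    qed
    then obtain r0 where r0: "card {x\<in>I - M. rep x = r0} < card {x\<in>M. rep x = r0}" by blast
    define K0 where "K0 = {x\<in>I. rep x = r0}"
    define Ob where "Ob = (M - K0) \<union> (K0 - M)"
    have e1: "{x\<in>M. rep x = r0} = M \<inter> K0" using MI by (auto simp: K0_def)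
    have e2: "{x\<in>I - M. rep x = r0} = K0 - M" by (auto simp: K0_def)
    have OI: "Ob \<subseteq> I" using MI by (auto simp: Ob_def K0_def)
    have finO: "finite Ob" using OI fin finite_subset by blast
    have consO: "cons Ob"
      unfolding cons_def
    proof (intro conjI ballI impI)
      show "Ob \<subseteq> I" by (rule OI)
    next
      fix i j assume ij: "i \<in> I" "j \<in> I" "par i j"
      hence "rep i = rep j" using rep_eq eqv_def by blast
      hence "i \<in> K0 \<longleftrightarrow> j \<in> K0" using ij by (auto simp: K0_def)
      moreover have "i \<in> M \<longleftrightarrow> j \<in> M" using consM ij unfolding cons_def by blast
      ultimately show "i \<in> Ob \<longleftrightarrow> j \<in> Ob" by (auto simp: Ob_def)
    next
      fix i j assume ij: "i \<in> I" "j \<in> I" "ort i j"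
      hence "rep i = rep j" using rep_eq eqv_def by blast
      hence "i \<in> K0 \<longleftrightarrow> j \<in> K0" using ij by (auto simp: K0_def)
      moreover have "i \<in> M \<longleftrightarrow> j \<notin> M" using consM ij unfolding cons_def by blast
      ultimately show "i \<in> Ob \<longleftrightarrow> j \<notin> Ob" by (auto simp: Ob_def)
    qed
    have fK: "finite K0" using fin by (simp add: K0_def)
    have cO: "card Ob = card (M - K0) + card (K0 - M)"
      unfolding Ob_def by (rule card_Un_disjoint) (use finM fK in auto)
    have cM2: "card M = card (M - K0) + card (M \<inter> K0)"
      using card_Int_Diff[OF finM, of K0] by (simp add: Int_commute add.commute)
    have Olt: "card Ob < N" using cO cM2 cM r0 e1 e2 by simp
    have cIO: "card I = card Ob + card (I - Ob)"
      using card_Diff_subset[OF finO OI] card_mono[OF fin OI] by simp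
    have "card (I - Ob) \<le> N" using cons_card cons_compl[OF consO] by blast
    hence Oge: "N \<le> card Ob + 3" using cIO lo NS by linarith
    obtain y where y: "is_product q y" "qinner q y y \<noteq> 0" "\<forall>i\<in>Ob. qinner q (\<rho> i) y = 0"
      using IH[of Ob \<rho>] finO prod\<rho> cons_orth[OF consO] nz\<rho> OI Olt Oge by (force simp: N_def)
    have "M \<inter> K0 \<noteq> {}" using r0 e1 by (metis card.empty not_less0)
    then obtain i0 where i0: "i0 \<in> M" "i0 \<in> K0" by blast
    have i0I: "i0 \<in> I" using i0 MI by auto
    show ?thesis
    proof (rule cover[of "perp (a i0)" y])
      show "nz (perp (a i0))" using nz_perp nza i0I by simp
      show "is_product q y" "qinner q y y \<noteq> 0" using y by auto
      show "\<forall>i\<in>I. ci (a i) (perp (a i0)) = 0 \<or> qinner q (\<rho> i) y = 0"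
      proof
        fix i assume i: "i \<in> I"
        show "ci (a i) (perp (a i0)) = 0 \<or> qinner q (\<rho> i) y = 0"
        proof (cases "i \<in> Ob")
          case True thus ?thesis using y by auto
        next
          case iO: False
          show ?thesis
          proof (cases "i \<in> M")
            case True
            hence iK: "i \<in> K0" using iO by (auto simp: Ob_def)
            have "eqv i i0" using rep_eqv i i0I iK i0 by (auto simp: K0_def)
            moreover have "\<not> ort i i0" using consM True i0 i i0I unfolding cons_def by blast
            ultimately have "par i i0" using eqv_def by blast
            thus ?thesis by (simp add: ci_perp par_def)
          next
            case iM: False
            hence iK: "i \<notin> K0" using iO i by (auto simp: Ob_def)
            have "qinner q (\<rho> i) y = (\<Sum>m\<in>M. qinner q (\<rho> m) y / qinner q (\<rho> m) (\<rho> m) * qinner q (\<rho> i) (\<rho> m))"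
              by (rule exB)
            also have "\<dots> = 0"
            proof (rule sum.neutral, rule ballI)
              fix m assume m: "m \<in> M"
              hence mI: "m \<in> I" using MI by auto
              show "qinner q (\<rho> m) y / qinner q (\<rho> m) (\<rho> m) * qinner q (\<rho> i) (\<rho> m) = 0"
              proof (cases "m \<in> K0")
                case True
                have "\<not> eqv i m"
                proof
                  assume "eqv i m"
                  hence "rep i = rep m" using rep_eq i mI by blast
                  thus False using True iK i by (auto simp: K0_def)
                qed
                thus ?thesis using F2 i mI by simp
              next
                case False
                hence "m \<in> Ob" using m by (auto simp: Ob_def)
                thus ?thesis using y by simp
              qed
            qed
            finally show ?thesis by simp
          qed
        qed
      qed
    qed
  qed
qed


lemma main_lemma:
  fixes g :: "'i \<Rightarrow> bool list \<Rightarrow> complex" and I :: "'i set"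
  shows "finite I \<Longrightarrow> (\<forall>i\<in>I. is_product q (g i)) \<Longrightarrow>
      (\<forall>i\<in>I. \<forall>j\<in>I. i \<noteq> j \<longrightarrow> qinner q (g i) (g j) = 0) \<Longrightarrow>
      (\<forall>i\<in>I. qinner q (g i) (g i) \<noteq> 0) \<Longrightarrow>
      2^q \<le> card I + 3 \<Longrightarrow> card I < 2^q \<Longrightarrow>
      \<exists>y. is_product q y \<and> qinner q y y \<noteq> 0 \<and> (\<forall>i\<in>I. qinner q (g i) y = 0)"
proof (induction q arbitrary: I g)
  case 0
  hence "I = {}" by simp
  moreover have "qinner 0 (prod_vec 0 (\<lambda>_ _. 1)) (prod_vec 0 (\<lambda>_ _. 1)) = 1"
  proof -
    have "qidx 0 = {[]}" by (auto simp: qidx_def)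
    thus ?thesis by (simp add: qinner_def prod_vec_def)
  qed
  ultimately show ?case by (intro exI[of _ "prod_vec 0 (\<lambda>_ _. 1)"]) (auto simp: is_product_def)
next
  case (Suc q)
  show ?case by (rule step[OF Suc.IH Suc.prems]) auto
qed

theorem proposition2:
  fixes p s :: nat
  assumes "(2::int) ^ p - 4 < int s" and "s < 2 ^ p"
  shows "\<not> (\<exists>S. is_UPB p S \<and> card S = s)"
proof
  assume "\<exists>S. is_UPB p S \<and> card S = s"
  then obtain S where S: "is_UPB p S" "card S = s" by blast
  have lo: "2 ^ p \<le> card S + 3"
  proof -
    have "int (2 ^ p) \<le> int (card S + 3)" using assms(1) S(2) by simp
    thus ?thesis by linarith
  qed
  obtain y where y: "is_product p y" "qinner p y y \<noteq> 0" "\<forall>u\<in>S. qinner p u y = 0"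
    using main_lemma[of S p "\<lambda>v. v"] S assms(2) lo unfolding is_UPB_def by auto
  have "y \<noteq> (\<lambda>_. 0)" using y(2) by (auto simp: qinner_def)
  moreover have "y \<notin> S" using y(2,3) by auto
  ultimately show False using S(1) y(1,3) unfolding is_UPB_def by blast
qed

end
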